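(* Let $\alpha_1,\dots,\alpha_m\in B_k$ and let $I=\langle\alpha_1,\dots,\alpha_m\rangle$ be the ideal of $B_k$ they generate. Then \[ I=\left\langle\sum_{A\subseteq\{1,\dots,m\},\,A\neq\emptyset}(-1)^{|A|+1}\Big(\prod_{j\in A}\alpha_j\Big)^{p^r-1}\right\rangle . \] In particular, every ideal of $B_k$ is principal.
   Context: Let $p$ be a prime, $r\ge 1$ an integer, and $\mathbb{F}_{p^r}$ the finite field with $p^r$ elements. For an integer $k\ge 1$, $B_k$ denotes the commutative ring $B_k=\mathbb{F}_{p^r}[v_1,\dots,v_k]/\langle v_i^2-v_i,\ v_iv_j-v_jv_i : 1\le i,j\le k\rangle$. *)

theory Defs
  imports "HOL-Computational_Algebra.Primes" "HOL-Algebra.Ideal"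
begin

text \<open>
  The ring B_k = F[v_1,...,v_k] / (v_i^2 - v_i, v_i v_j - v_j v_i), F a finite field.
  Modulo the relations v_i^2 = v_i every monomial reduces to a unique squarefree
  monomial v_S = prod_{i in S} v_i with S a subset of {1..k}, and these monomials
  form an F-basis of B_k, multiplied by v_S v_T = v_(S union T).
  We therefore represent an element of B_k by its coefficient function
  f :: nat set => 'a, supported on the subsets of {1..k} (f S = coefficient of v_S).
\<close>

definition Bk :: "nat \<Rightarrow> (nat set \<Rightarrow> 'a::field) ring" where
  "Bk k = \<lparr> carrier = {f. \<forall>S. \<not> S \<subseteq> {1..k} \<longrightarrow> f S = 0},
            mult = (\<lambda>f g. \<lambda>U. \<Sum>S\<in>Pow {1..k}. \<Sum>T\<in>Pow {1..k}.
                                    if S \<union> T = U then f S * g T else 0),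
            one = (\<lambda>S. if S = {} then 1 else 0),
            zero = (\<lambda>S. 0),
            add = (\<lambda>f g. \<lambda>S. f S + g S) \<rparr>"

definition Bk_var :: "nat \<Rightarrow> nat set \<Rightarrow> 'a::field" where
  "Bk_var i = (\<lambda>S. if S = {i} then 1 else 0)"

end

theory Submission
  imports Defs
begin

definition ev :: "nat set \<Rightarrow> (nat set \<Rightarrow> 'a::field) \<Rightarrow> 'a" where
  "ev X f = (\<Sum>S\<in>Pow X. f S)"

lemma Bk_simps:
  "carrier (Bk k) = {f. \<forall>S. \<not> S \<subseteq> {1..k} \<longrightarrow> f S = 0}"
  "f \<otimes>\<^bsub>Bk k\<^esub> g = (\<lambda>U. \<Sum>S\<in>Pow {1..k}. \<Sum>T\<in>Pow {1..k}. if S \<union> T = U then f S * g T else 0)"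
  "\<one>\<^bsub>Bk k\<^esub> = (\<lambda>S. if S = {} then 1 else 0)"
  "\<zero>\<^bsub>Bk k\<^esub> = (\<lambda>S. 0)"
  "f \<oplus>\<^bsub>Bk k\<^esub> g = (\<lambda>S. f S + g S)"
  by (simp_all add: Bk_def)

lemma sum_Pow_restrict:
  assumes "X \<subseteq> Y" "finite Y"
  shows "(\<Sum>S\<in>Pow Y. if S \<subseteq> X then f S else 0) = sum f (Pow X)"
proof -
  have e: "Pow Y \<inter> {S. S \<subseteq> X} = Pow X" using assms by auto
  have "sum f (Pow Y \<inter> {S. S \<subseteq> X}) = (\<Sum>S\<in>Pow Y. if S \<in> {S. S \<subseteq> X} then f S else 0)"
    using assms by (intro sum.inter_restrict) simp
  then show ?thesis using e by simp
qed

lemma ev_mult: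
  assumes "X \<subseteq> {1..k}"
  shows "ev X (f \<otimes>\<^bsub>Bk k\<^esub> g) = ev X f * ev X (g :: nat set \<Rightarrow> 'a::field)"
proof -
  let ?P = "Pow {1..k}"
  have fin: "finite ?P" by simp
  have finX: "finite X" using assms finite_subset by blast
  have "ev X (f \<otimes>\<^bsub>Bk k\<^esub> g) = (\<Sum>U\<in>Pow X. \<Sum>S\<in>?P. \<Sum>T\<in>?P. if S \<union> T = U then f S * g T else 0)"
    by (simp add: ev_def Bk_simps)
  also have "\<dots> = (\<Sum>S\<in>?P. \<Sum>T\<in>?P. \<Sum>U\<in>Pow X. if S \<union> T = U then f S * g T else 0)"
    by (subst sum.swap) (intro sum.cong refl sum.swap)
  also have "\<dots> = (\<Sum>S\<in>?P. \<Sum>T\<in>?P. (if S \<subseteq> X then f S else 0) * (if T \<subseteq> X then g T else 0))"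
    using finX by (intro sum.cong refl) (auto simp: sum.delta sum.delta')
  also have "\<dots> = (\<Sum>S\<in>?P. (if S \<subseteq> X then f S else 0)) * (\<Sum>T\<in>?P. (if T \<subseteq> X then g T else 0))"
    by (simp add: sum_product)
  also have "(\<Sum>S\<in>?P. (if S \<subseteq> X then f S else 0)) = ev X f"
    unfolding ev_def using assms by (intro sum_Pow_restrict) auto
  also have "(\<Sum>S\<in>?P. (if S \<subseteq> X then g S else 0)) = ev X g"
    unfolding ev_def using assms by (intro sum_Pow_restrict) auto
  finally show ?thesis .
qed

lemma ev_add: "ev X (f \<oplus>\<^bsub>Bk k\<^esub> g) = ev X f + ev X g"
  by (simp add: ev_def Bk_simps sum.distrib)

lemma ev_one: "finite X \<Longrightarrow> ev X (\<one>\<^bsub>Bk k\<^esub> :: nat set \<Rightarrow> 'a::field) = 1"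
  by (simp add: ev_def Bk_simps sum.delta')

lemma ev_zero: "ev X (\<zero>\<^bsub>Bk k\<^esub> :: nat set \<Rightarrow> 'a::field) = 0"
  by (simp add: ev_def Bk_simps)

lemma Bk_mult_closed: "f \<otimes>\<^bsub>Bk k\<^esub> g \<in> carrier (Bk k)"
proof -
  have "(\<Sum>S\<in>Pow {1..k}. \<Sum>T\<in>Pow {1..k}. if S \<union> T = U then f S * g T else 0) = 0"
    if "\<not> U \<subseteq> {1..k}" for U
  proof (intro sum.neutral ballI)
    fix S T assume "S \<in> Pow {1..k}" "T \<in> Pow {1..k}"
    then have "S \<union> T \<noteq> U" using that by auto
    then show "(if S \<union> T = U then f S * g T else 0) = 0" by simp
  qed
  then show ?thesis unfolding Bk_simps by blast
qed

lemma Bk_add_closed: "f \<in> carrier (Bk k) \<Longrightarrow> g \<in> carrier (Bk k) \<Longrightarrow> f \<oplus>\<^bsub>Bk k\<^esub> g \<in> carrier (Bk k)"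
  unfolding Bk_simps by auto

lemma ev_inj0:
  fixes f :: "nat set \<Rightarrow> 'a::field"
  assumes f: "f \<in> carrier (Bk k)" and z: "\<And>X. X \<subseteq> {1..k} \<Longrightarrow> ev X f = 0"
  shows "f = (\<lambda>S. 0)"
proof (rule ccontr)
  assume "f \<noteq> (\<lambda>S. 0)"
  then obtain S0 where "f S0 \<noteq> 0" by auto
  then obtain S where S: "f S \<noteq> 0" and min: "\<And>T. f T \<noteq> 0 \<Longrightarrow> card S \<le> card T"
    using ex_has_least_nat[of "\<lambda>S. f S \<noteq> 0" S0 card] by blast
  have Sk: "S \<subseteq> {1..k}" using S f by (auto simp: Bk_simps)
  then have finS: "finite S" using finite_subset by blast
  have "ev S f = f S + sum f (Pow S - {S})"
    unfolding ev_def using finS by (subst sum.remove[of _ S]) auto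
  also have "sum f (Pow S - {S}) = 0"
  proof (rule sum.neutral, rule ballI)
    fix T assume "T \<in> Pow S - {S}"
    then have "T \<subset> S" by auto
    then have "card T < card S" using finS psubset_card_mono by blast
    then show "f T = 0" using min by (meson not_le)
  qed
  finally have "ev S f = f S" by simp
  with z[OF Sk] S show False by simp
qed

lemma ev_ext:
  fixes f g :: "nat set \<Rightarrow> 'a::field"
  assumes f: "f \<in> carrier (Bk k)" and g: "g \<in> carrier (Bk k)"
    and z: "\<And>X. X \<subseteq> {1..k} \<Longrightarrow> ev X f = ev X g"
  shows "f = g"
proof -
  have h: "(\<lambda>S. f S - g S) \<in> carrier (Bk k)" using f g by (auto simp: Bk_simps)
  have "(\<lambda>S. f S - g S) = (\<lambda>S. 0)"
    by (rule ev_inj0[OF h]) (use z in \<open>simp add: ev_def sum_subtractf\<close>)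
  then have "\<And>S. f S - g S = 0" by (simp add: fun_eq_iff)
  then show ?thesis by (simp add: fun_eq_iff)
qed

lemma Bk_cring: "cring (Bk k :: (nat set \<Rightarrow> 'a::field) ring)"
proof (rule cringI)
  show "abelian_group (Bk k :: (nat set \<Rightarrow> 'a::field) ring)"
  proof (rule abelian_groupI)
    fix x assume x: "x \<in> carrier (Bk k :: (nat set \<Rightarrow> 'a::field) ring)"
    show "\<exists>y\<in>carrier (Bk k). y \<oplus>\<^bsub>Bk k\<^esub> x = \<zero>\<^bsub>Bk k\<^esub>"
      by (rule bexI[of _ "\<lambda>S. - x S"]) (use x in \<open>simp_all add: Bk_simps\<close>)
  next
    fix x y assume "x \<in> carrier (Bk k :: (nat set \<Rightarrow> 'a::field) ring)" "y \<in> carrier (Bk k :: (nat set \<Rightarrow> 'a::field) ring)"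
    then show "x \<oplus>\<^bsub>Bk k\<^esub> y \<in> carrier (Bk k)" by (rule Bk_add_closed)
  next
    show "\<zero>\<^bsub>Bk k\<^esub> \<in> carrier (Bk k :: (nat set \<Rightarrow> 'a::field) ring)" by (simp add: Bk_simps)
  next
    fix x y z :: "nat set \<Rightarrow> 'a"
    show "x \<oplus>\<^bsub>Bk k\<^esub> y \<oplus>\<^bsub>Bk k\<^esub> z = x \<oplus>\<^bsub>Bk k\<^esub> (y \<oplus>\<^bsub>Bk k\<^esub> z)"
      by (simp add: Bk_simps add.assoc)
  next
    fix x y :: "nat set \<Rightarrow> 'a"
    show "x \<oplus>\<^bsub>Bk k\<^esub> y = y \<oplus>\<^bsub>Bk k\<^esub> x"
      by (simp add: Bk_simps add.commute)
  next
    fix x :: "nat set \<Rightarrow> 'a"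
    show "\<zero>\<^bsub>Bk k\<^esub> \<oplus>\<^bsub>Bk k\<^esub> x = x"
      by (simp add: Bk_simps)
  qed
  show "comm_monoid (Bk k :: (nat set \<Rightarrow> 'a::field) ring)"
  proof (rule comm_monoidI)
    fix x y z :: "nat set \<Rightarrow> 'a"
    assume x: "x \<in> carrier (Bk k)" and y: "y \<in> carrier (Bk k)" and z: "z \<in> carrier (Bk k)"
    show "x \<otimes>\<^bsub>Bk k\<^esub> y \<otimes>\<^bsub>Bk k\<^esub> z = x \<otimes>\<^bsub>Bk k\<^esub> (y \<otimes>\<^bsub>Bk k\<^esub> z)"
      by (rule ev_ext[OF Bk_mult_closed Bk_mult_closed]) (simp add: ev_mult)
  next
    fix x y :: "nat set \<Rightarrow> 'a"
    assume x: "x \<in> carrier (Bk k)" and y: "y \<in> carrier (Bk k)"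
    show "x \<otimes>\<^bsub>Bk k\<^esub> y = y \<otimes>\<^bsub>Bk k\<^esub> x"
      by (rule ev_ext[OF Bk_mult_closed Bk_mult_closed]) (simp add: ev_mult)
  next
    fix x :: "nat set \<Rightarrow> 'a"
    assume x: "x \<in> carrier (Bk k)"
    show "\<one>\<^bsub>Bk k\<^esub> \<otimes>\<^bsub>Bk k\<^esub> x = x"
      by (rule ev_ext[OF Bk_mult_closed x]) (simp add: ev_mult ev_one finite_subset)
  next
    show "\<one>\<^bsub>Bk k\<^esub> \<in> carrier (Bk k :: (nat set \<Rightarrow> 'a::field) ring)"
      by (simp add: Bk_simps)
  qed (rule Bk_mult_closed)
  fix x y z :: "nat set \<Rightarrow> 'a"
  assume x: "x \<in> carrier (Bk k)" and y: "y \<in> carrier (Bk k)" and z: "z \<in> carrier (Bk k)"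
  show "(x \<oplus>\<^bsub>Bk k\<^esub> y) \<otimes>\<^bsub>Bk k\<^esub> z = x \<otimes>\<^bsub>Bk k\<^esub> z \<oplus>\<^bsub>Bk k\<^esub> y \<otimes>\<^bsub>Bk k\<^esub> z"
    by (rule ev_ext[OF Bk_mult_closed Bk_add_closed[OF Bk_mult_closed Bk_mult_closed]])
       (simp add: ev_mult ev_add distrib_right)
qed

lemma fin_field_pow:
  fixes a :: "'a::{field,finite}"
  assumes a: "a \<noteq> 0"
  shows "a ^ (card (UNIV::'a set) - 1) = 1"
proof -
  let ?N = "UNIV - {0::'a}"
  have inj: "inj_on (\<lambda>x. a * x) ?N" using a by (auto intro: inj_onI)
  have img: "(\<lambda>x. a * x) ` ?N = ?N"
  proof
    show "(\<lambda>x. a * x) ` ?N \<subseteq> ?N" using a by auto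
    show "?N \<subseteq> (\<lambda>x. a * x) ` ?N"
    proof
      fix y assume "y \<in> ?N"
      then have "y = a * (y / a)" "y / a \<in> ?N" using a by auto
      then show "y \<in> (\<lambda>x. a * x) ` ?N" by blast
    qed
  qed
  have "prod id ?N = prod id ((\<lambda>x. a * x) ` ?N)" using img by simp
  also have "\<dots> = prod (\<lambda>x. a * x) ?N" using prod.reindex[OF inj, of id] by simp
  also have "\<dots> = a ^ card ?N * prod id ?N" by (simp add: prod.distrib)
  finally have e: "prod id ?N = a ^ card ?N * prod id ?N" .
  have nz: "prod id ?N \<noteq> 0" by (simp add: prod_zero_iff)
  have c: "card ?N = card (UNIV::'a set) - 1" by (simp add: card_Diff_singleton)
  from e nz have "a ^ card ?N = 1"
    by (metis mult_cancel_right1)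
  then show ?thesis using c by simp
qed

lemma incl_excl_prod:
  fixes a :: "nat \<Rightarrow> 'a::comm_ring_1"
  assumes "finite J"
  shows "(\<Sum>A\<in>{A. A \<subseteq> J \<and> A \<noteq> {}}. (-1) ^ (card A + 1) * (\<Prod>j\<in>A. a j)) = 1 - (\<Prod>j\<in>J. 1 - a j)"
proof -
  have "(\<Prod>j\<in>J. 1 - a j) = (\<Prod>j\<in>J. (- a j) + 1)" by simp
  also have "\<dots> = (\<Sum>B\<in>Pow J. (\<Prod>j\<in>B. - a j) * (\<Prod>j\<in>J-B. 1))"
    by (rule prod_add[OF assms])
  also have "\<dots> = (\<Sum>B\<in>Pow J. (-1) ^ card B * (\<Prod>j\<in>B. a j))"
    by (intro sum.cong refl) (simp add: prod_uminus)
  also have "\<dots> = (-1) ^ card {} * (\<Prod>j\<in>{}. a j) + (\<Sum>B\<in>Pow J - {{}}. (-1) ^ card B * (\<Prod>j\<in>B. a j))"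
    using assms by (subst sum.remove[of _ "{}"]) auto
  also have "Pow J - {{}} = {A. A \<subseteq> J \<and> A \<noteq> {}}" by auto
  finally have "(\<Prod>j\<in>J. 1 - a j) = 1 + (\<Sum>B\<in>{A. A \<subseteq> J \<and> A \<noteq> {}}. (-1) ^ card B * (\<Prod>j\<in>B. a j))" by simp
  moreover have "(\<Sum>B\<in>{A. A \<subseteq> J \<and> A \<noteq> {}}. (-1) ^ (card B + 1) * (\<Prod>j\<in>B. a j))
      = - (\<Sum>B\<in>{A. A \<subseteq> J \<and> A \<noteq> {}}. (-1) ^ card B * (\<Prod>j\<in>B. a j))"
    by (simp add: sum_negf[symmetric])
  ultimately show ?thesis by simp
qed


lemma ev_finsum:
  fixes F :: "'b \<Rightarrow> nat set \<Rightarrow> 'a::field"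
  assumes "finite A" "\<And>a. a \<in> A \<Longrightarrow> F a \<in> carrier (Bk k)"
  shows "ev X (finsum (Bk k) F A) = (\<Sum>a\<in>A. ev X (F a))"
  using assms
proof (induction A rule: finite_induct)
  case empty
  interpret R: cring "Bk k :: (nat set \<Rightarrow> 'a) ring" by (rule Bk_cring)
  show ?case by (simp add: ev_zero)
next
  case (insert a A)
  interpret R: cring "Bk k :: (nat set \<Rightarrow> 'a) ring" by (rule Bk_cring)
  have "finsum (Bk k) F (insert a A) = F a \<oplus>\<^bsub>Bk k\<^esub> finsum (Bk k) F A"
    using insert by (intro R.finsum_insert) auto
  then show ?case using insert by (simp add: ev_add)
qed

lemma ev_finprod:
  fixes F :: "'b \<Rightarrow> nat set \<Rightarrow> 'a::field"
  assumes "finite A" "\<And>a. a \<in> A \<Longrightarrow> F a \<in> carrier (Bk k)" "X \<subseteq> {1..k}"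
  shows "ev X (finprod (Bk k) F A) = (\<Prod>a\<in>A. ev X (F a))"
  using assms
proof (induction A rule: finite_induct)
  case empty
  interpret R: cring "Bk k :: (nat set \<Rightarrow> 'a) ring" by (rule Bk_cring)
  have "finite X" using empty finite_subset by blast
  then show ?case by (simp add: ev_one)
next
  case (insert a A)
  interpret R: cring "Bk k :: (nat set \<Rightarrow> 'a) ring" by (rule Bk_cring)
  have "finprod (Bk k) F (insert a A) = F a \<otimes>\<^bsub>Bk k\<^esub> finprod (Bk k) F A"
    using insert by (intro R.finprod_insert) auto
  then show ?case using insert by (simp add: ev_mult)
qed

lemma ev_pow:
  fixes f :: "nat set \<Rightarrow> 'a::field"
  assumes "X \<subseteq> {1..k}"
  shows "ev X (f [^]\<^bsub>Bk k\<^esub> (n::nat)) = ev X f ^ n"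
proof (induction n)
  case 0
  have "finite X" using assms finite_subset by blast
  then show ?case by (simp add: ev_one)
next
  case (Suc n)
  then show ?case using assms by (simp add: ev_mult)
qed

lemma Bk_neg:
  fixes f :: "nat set \<Rightarrow> 'a::field"
  assumes f: "f \<in> carrier (Bk k)"
  shows "\<ominus>\<^bsub>Bk k\<^esub> f = (\<lambda>S. - f S)"
proof -
  interpret R: cring "Bk k :: (nat set \<Rightarrow> 'a) ring" by (rule Bk_cring)
  have c: "(\<lambda>S. - f S) \<in> carrier (Bk k)" using f by (simp add: Bk_simps)
  have "(\<lambda>S. - f S) \<oplus>\<^bsub>Bk k\<^esub> f = \<zero>\<^bsub>Bk k\<^esub>" by (simp add: Bk_simps)
  then show ?thesis using R.minus_equality c f by blast
qed

lemma ev_neg_one: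
  assumes "finite X"
  shows "ev X (\<ominus>\<^bsub>Bk k\<^esub> \<one>\<^bsub>Bk k\<^esub> :: nat set \<Rightarrow> 'a::field) = -1"
proof -
  interpret R: cring "Bk k :: (nat set \<Rightarrow> 'a) ring" by (rule Bk_cring)
  have "ev X (\<lambda>S. - (\<one>\<^bsub>Bk k\<^esub> :: nat set \<Rightarrow> 'a) S) = - ev X (\<one>\<^bsub>Bk k\<^esub> :: nat set \<Rightarrow> 'a)"
    by (simp add: ev_def sum_negf)
  then show ?thesis using assms by (simp add: Bk_neg ev_one)
qed

lemma ideal_finsum_closed:
  fixes F :: "'b \<Rightarrow> 'c"
  assumes I: "ideal I R" and "finite B" and "\<And>b. b \<in> B \<Longrightarrow> F b \<in> I"
  shows "finsum R F B \<in> I"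
  using assms(2,3)
proof (induction B rule: finite_induct)
  case empty
  interpret ideal I R by (rule I)
  show ?case by simp
next
  case (insert b B)
  interpret ideal I R by (rule I)
  have "finsum R F (insert b B) = F b \<oplus>\<^bsub>R\<^esub> finsum R F B"
    using insert Icarr by (intro finsum_insert) auto
  then show ?case using insert by simp
qed


lemma part1:
  fixes \<alpha> :: "nat \<Rightarrow> nat set \<Rightarrow> 'a::{field,finite}"
  assumes \<alpha>: "\<And>j. j \<in> {1..m} \<Longrightarrow> \<alpha> j \<in> carrier (Bk k)"
  shows "Idl\<^bsub>Bk k\<^esub> (\<alpha> ` {1..m}) =
           Idl\<^bsub>Bk k\<^esub> {\<Oplus>\<^bsub>Bk k\<^esub> A \<in> {A. A \<subseteq> {1..m} \<and> A \<noteq> {}}.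
              ((\<ominus>\<^bsub>Bk k\<^esub> \<one>\<^bsub>Bk k\<^esub>) [^]\<^bsub>Bk k\<^esub> (card A + 1))
                \<otimes>\<^bsub>Bk k\<^esub> ((\<Otimes>\<^bsub>Bk k\<^esub> j \<in> A. \<alpha> j) [^]\<^bsub>Bk k\<^esub> (card (UNIV :: 'a set) - 1))}"
    (is "?L = Idl\<^bsub>Bk k\<^esub> {finsum (Bk k) ?T ?A}")
proof -
  interpret R: cring "Bk k :: (nat set \<Rightarrow> 'a) ring" by (rule Bk_cring)
  let ?q = "card (UNIV :: 'a set)"
  define g where "g = finsum (Bk k) ?T ?A"
  have finA: "finite ?A" by simp
  have \<alpha>Pi: "\<alpha> \<in> A \<rightarrow> carrier (Bk k)" if "A \<subseteq> {1..m}" for A using \<alpha> that by auto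
  have Tc: "?T A \<in> carrier (Bk k)" if "A \<in> ?A" for A
    using that \<alpha>Pi[of A] by (intro R.m_closed R.nat_pow_closed R.finprod_closed) auto
  have gc: "g \<in> carrier (Bk k)" unfolding g_def using Tc by (intro R.finsum_closed) auto
  have \<alpha>c: "\<alpha> ` {1..m} \<subseteq> carrier (Bk k)" using \<alpha> by auto
  have Iid: "ideal ?L (Bk k)" by (rule R.genideal_ideal[OF \<alpha>c])
  have q2: "?q \<ge> 2"
  proof -
    have "{0::'a, 1} \<subseteq> UNIV" by simp
    then have "card {0::'a, 1} \<le> ?q" by (intro card_mono) auto
    then show ?thesis by simp
  qed
  have "g \<in> ?L"
    unfolding g_def
  proof (rule ideal_finsum_closed[OF Iid finA])
    fix A assume A: "A \<in> ?A"
    then obtain j where j: "j \<in> A" by auto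
    have finA': "finite A" using A finite_subset by auto
    have "finprod (Bk k) \<alpha> A = finprod (Bk k) \<alpha> (insert j (A - {j}))" using j by (simp add: insert_absorb)
    also have "\<dots> = \<alpha> j \<otimes>\<^bsub>Bk k\<^esub> finprod (Bk k) \<alpha> (A - {j})"
      using A j \<alpha>Pi[of A] finA' by (intro R.finprod_insert) auto
    finally have pe: "finprod (Bk k) \<alpha> A = \<alpha> j \<otimes>\<^bsub>Bk k\<^esub> finprod (Bk k) \<alpha> (A - {j})" .
    have "\<alpha> j \<in> ?L" using A j R.genideal_self[OF \<alpha>c] by auto
    then have P: "finprod (Bk k) \<alpha> A \<in> ?L"
      unfolding pe using A \<alpha>Pi[of "A - {j}"]
      by (intro ideal.I_r_closed[OF Iid] R.finprod_closed) auto
    have n: "?q - 1 = Suc (?q - 2)" using q2 by simp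
    have Pc: "finprod (Bk k) \<alpha> A \<in> carrier (Bk k)" using A \<alpha>Pi[of A] by (intro R.finprod_closed) auto
    have "finprod (Bk k) \<alpha> A [^]\<^bsub>Bk k\<^esub> (?q - 1) = (finprod (Bk k) \<alpha> A [^]\<^bsub>Bk k\<^esub> (?q - 2)) \<otimes>\<^bsub>Bk k\<^esub> finprod (Bk k) \<alpha> A"
      unfolding n by (rule nat_pow_Suc)
    also have "\<dots> \<in> ?L" by (rule ideal.I_l_closed[OF Iid P R.nat_pow_closed[OF Pc]])
    finally have "finprod (Bk k) \<alpha> A [^]\<^bsub>Bk k\<^esub> (?q - 1) \<in> ?L" .
    then show "?T A \<in> ?L" by (intro ideal.I_l_closed[OF Iid]) auto
  qed
  then have sub1: "Idl\<^bsub>Bk k\<^esub> {g} \<subseteq> ?L" by (intro R.genideal_minimal[OF Iid]) auto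
  have key: "\<alpha> j = g \<otimes>\<^bsub>Bk k\<^esub> \<alpha> j" if j: "j \<in> {1..m}" for j
  proof (rule ev_ext[OF \<alpha>[OF j] Bk_mult_closed])
    fix X assume X: "X \<subseteq> {1..k}"
    have finX: "finite X" using X finite_subset by blast
    define b where "b i = ev X (\<alpha> i) ^ (?q - 1)" for i
    have "ev X g = (\<Sum>A\<in>?A. ev X (?T A))" unfolding g_def using Tc by (intro ev_finsum) auto
    also have "\<dots> = (\<Sum>A\<in>?A. (-1) ^ (card A + 1) * (\<Prod>i\<in>A. b i))"
    proof (intro sum.cong refl)
      fix A assume A: "A \<in> ?A"
      have finA': "finite A" using A finite_subset by auto
      have "ev X (finprod (Bk k) \<alpha> A) = (\<Prod>i\<in>A. ev X (\<alpha> i))"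
        using A \<alpha> finA' X by (intro ev_finprod) auto
      then show "ev X (?T A) = (-1) ^ (card A + 1) * (\<Prod>i\<in>A. b i)"
        using X finX by (simp add: ev_mult ev_pow ev_neg_one b_def prod_power_distrib)
    qed
    also have "\<dots> = 1 - (\<Prod>i\<in>{1..m}. 1 - b i)" by (rule incl_excl_prod) simp
    finally have eg: "ev X g = 1 - (\<Prod>i\<in>{1..m}. 1 - b i)" .
    show "ev X (\<alpha> j) = ev X (g \<otimes>\<^bsub>Bk k\<^esub> \<alpha> j)"
    proof (cases "ev X (\<alpha> j) = 0")
      case True
      then show ?thesis using X by (simp add: ev_mult)
    next
      case False
      then have "b j = 1" unfolding b_def by (rule fin_field_pow)
      then have "(\<Prod>i\<in>{1..m}. 1 - b i) = 0" using j by (intro prod_zero) auto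
      then show ?thesis using X eg by (simp add: ev_mult)
    qed
  qed
  have "g \<in> Idl\<^bsub>Bk k\<^esub> {g}" by (rule R.genideal_self'[OF gc])
  then have "\<alpha> j \<in> Idl\<^bsub>Bk k\<^esub> {g}" if "j \<in> {1..m}" for j
    using key[OF that] \<alpha>[OF that] gc
    by (metis R.genideal_ideal empty_subsetI ideal.I_r_closed insert_subset)
  then have sub2: "?L \<subseteq> Idl\<^bsub>Bk k\<^esub> {g}"
    using gc by (intro R.genideal_minimal R.genideal_ideal) auto
  from sub1 sub2 show ?thesis unfolding g_def by blast
qed


lemma Bk_finite: "finite (carrier (Bk k :: (nat set \<Rightarrow> 'a::{field,finite}) ring))"
proof -
  let ?P = "Pow {1..k}"
  have inj: "inj_on (\<lambda>f. restrict f ?P) (carrier (Bk k :: (nat set \<Rightarrow> 'a) ring))"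
  proof (rule inj_onI)
    fix f g :: "nat set \<Rightarrow> 'a"
    assume f: "f \<in> carrier (Bk k)" and g: "g \<in> carrier (Bk k)" and e: "restrict f ?P = restrict g ?P"
    show "f = g"
    proof
      fix S show "f S = g S"
      proof (cases "S \<in> ?P")
        case True then show ?thesis using fun_cong[OF e, of S] by simp
      next
        case False then show ?thesis using f g by (simp add: Bk_simps)
      qed
    qed
  qed
  have "(\<lambda>f. restrict f ?P) ` (carrier (Bk k :: (nat set \<Rightarrow> 'a) ring)) \<subseteq> PiE ?P (\<lambda>_. UNIV)"
    by (intro image_subsetI) (simp only: restrict_PiE_iff, simp)
  moreover have "finite (PiE ?P (\<lambda>_. (UNIV :: 'a set)))" by (intro finite_PiE) auto
  ultimately show ?thesis using inj finite_imageD finite_subset by blast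
qed

theorem proposition2p6:
  fixes p r k m :: nat
    and \<alpha> :: "nat \<Rightarrow> nat set \<Rightarrow> 'a::{field, finite}"
  assumes "prime p" and "r \<ge> 1" and "card (UNIV :: 'a set) = p ^ r" and "k \<ge> 1"
    and "\<And>j. j \<in> {1..m} \<Longrightarrow> \<alpha> j \<in> carrier (Bk k)"
  shows "Idl\<^bsub>Bk k\<^esub> (\<alpha> ` {1..m}) =
           Idl\<^bsub>Bk k\<^esub> {\<Oplus>\<^bsub>Bk k\<^esub> A \<in> {A. A \<subseteq> {1..m} \<and> A \<noteq> {}}.
              ((\<ominus>\<^bsub>Bk k\<^esub> \<one>\<^bsub>Bk k\<^esub>) [^]\<^bsub>Bk k\<^esub> (card A + 1))
                \<otimes>\<^bsub>Bk k\<^esub> ((\<Otimes>\<^bsub>Bk k\<^esub> j \<in> A. \<alpha> j) [^]\<^bsub>Bk k\<^esub> (p ^ r - 1))}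
         \<and> (\<forall>I :: (nat set \<Rightarrow> 'a) set. ideal I (Bk k) \<longrightarrow> principalideal I (Bk k))"
proof
  show "Idl\<^bsub>Bk k\<^esub> (\<alpha> ` {1..m}) =
           Idl\<^bsub>Bk k\<^esub> {\<Oplus>\<^bsub>Bk k\<^esub> A \<in> {A. A \<subseteq> {1..m} \<and> A \<noteq> {}}.
              ((\<ominus>\<^bsub>Bk k\<^esub> \<one>\<^bsub>Bk k\<^esub>) [^]\<^bsub>Bk k\<^esub> (card A + 1))
                \<otimes>\<^bsub>Bk k\<^esub> ((\<Otimes>\<^bsub>Bk k\<^esub> j \<in> A. \<alpha> j) [^]\<^bsub>Bk k\<^esub> (p ^ r - 1))}"
    using part1[of m \<alpha> k, OF assms(5)] assms(3) by simp
  show "\<forall>I :: (nat set \<Rightarrow> 'a) set. ideal I (Bk k) \<longrightarrow> principalideal I (Bk k)"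
  proof (intro allI impI)
    fix I :: "(nat set \<Rightarrow> 'a) set"
    assume I: "ideal I (Bk k)"
    interpret R: cring "Bk k :: (nat set \<Rightarrow> 'a) ring" by (rule Bk_cring)
    have Ic: "I \<subseteq> carrier (Bk k)" using ideal.Icarr[OF I] by blast
    then have finI: "finite I" using Bk_finite finite_subset by blast
    obtain h where h: "bij_betw h {1..card I} I" using ex_bij_betw_nat_finite_1[OF finI] by blast
    have himg: "h ` {1..card I} = I" using h by (simp add: bij_betw_def)
    have hc: "\<And>j. j \<in> {1..card I} \<Longrightarrow> h j \<in> carrier (Bk k)" using himg Ic by auto
    have IdlI: "Idl\<^bsub>Bk k\<^esub> I = I"
      using R.genideal_minimal[OF I] R.genideal_self[OF Ic] by blast
    let ?g = "\<Oplus>\<^bsub>Bk k\<^esub> A \<in> {A. A \<subseteq> {1..card I} \<and> A \<noteq> {}}.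
              ((\<ominus>\<^bsub>Bk k\<^esub> \<one>\<^bsub>Bk k\<^esub>) [^]\<^bsub>Bk k\<^esub> (card A + 1))
                \<otimes>\<^bsub>Bk k\<^esub> ((\<Otimes>\<^bsub>Bk k\<^esub> j \<in> A. h j) [^]\<^bsub>Bk k\<^esub> (card (UNIV :: 'a set) - 1))"
    have eq: "I = Idl\<^bsub>Bk k\<^esub> {?g}"
      using part1[of "card I" h k, OF hc] IdlI himg by simp
    have hPi: "h \<in> A \<rightarrow> carrier (Bk k)" if "A \<subseteq> {1..card I}" for A using hc that by auto
    have gc: "?g \<in> carrier (Bk k)"
      using hPi by (intro R.finsum_closed Pi_I R.m_closed R.nat_pow_closed R.finprod_closed) auto
    show "principalideal I (Bk k)"
      by (rule principalidealI[OF I]) (use eq gc in blast)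
  qed
qed

end
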